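(* Realize $\mathrm{SU}(2)\times\mathbb{R}$ as the group of matrices $(A,B,v)=\begin{pmatrix}A&B&0\\-\overline{B}&\overline{A}&0\\0&0&e^v\end{pmatrix}$ with $A,B\in\mathbb{C}$, $|A|^2+|B|^2=1$, $v\in\mathbb{R}$, and let $E_1=\tfrac12(e_{12}-e_{21})$, $E_2=\tfrac{i}{2}(e_{12}+e_{21})$, $E_3=\tfrac{i}{2}(e_{11}-e_{22})$, $E_4=e_{33}$ (with $e_{jk}$ the $3\times3$ matrix units), and $e_1=E_1$, $e_2=E_4-E_3$, $e_3=E_2$, $e_4=E_3$. For $\alpha_1^2+\alpha_2^2+\alpha_3^2=1$ and $\beta\in\mathbb{R}$ let $$\tilde\gamma_1(t)=\tilde\gamma_1(\alpha_1,\alpha_2,\alpha_3,\beta;t)=\exp\bigl(t(\alpha_1e_1+\alpha_2e_2+\alpha_3e_3+\beta e_4)\bigr)\exp(-t\beta e_4)$$ (the arclength-parametrized geodesics through $\mathrm{Id}$ of the left-invariant sub-Riemannian metric $d_1$ defined by $\mathrm{span}(e_1,e_2,e_3)$ with orthonormal basis $e_1,e_2,e_3$). Put $w_1=\sqrt{1-\alpha_2^2+(\beta-\alpha_2)^2}$, $n_1=\cos\frac{w_1t}{2}$, $m_1=\frac{1}{w_1}\sin\frac{w_1t}{2}$. If $\alpha_2\neq\pm1$, then $\tilde\gamma_1(t)=(A,B,v)(t)$ with $$A=\Bigl(n_1\cos\tfrac{\beta t}{2}+(\beta-\alpha_2)m_1\sin\tfrac{\beta t}{2}\Bigr)+\Bigl((\beta-\alpha_2)m_1\cos\tfrac{\beta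 t}{2}-n_1\sin\tfrac{\beta t}{2}\Bigr)i,$$ $$B=m_1\sqrt{1-\alpha_2^2}\Bigl[\cos\bigl(\tfrac{\beta t}{2}+\varphi_0\bigr)+i\sin\bigl(\tfrac{\beta t}{2}+\varphi_0\bigr)\Bigr],\qquad v=\alpha_2t,$$ where $\cos\varphi_0=\alpha_1/\sqrt{1-\alpha_2^2}$, $\sin\varphi_0=\alpha_3/\sqrt{1-\alpha_2^2}$. If $\alpha_2=\pm1$, then $\tilde\gamma_1(t)=(A,B,v)(t)$ with $A=e^{-i\alpha_2t/2}$, $B\equiv0$, $v=\alpha_2t$.
   Context: The matrices $E_1,\dots,E_4$ satisfy $[E_1,E_2]=E_3$, $[E_2,E_3]=E_1$, $[E_3,E_1]=E_2$, $[E_i,E_4]=0$. *)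

theory Defs
  imports "HOL-Analysis.Analysis" "HOL-Library.Numeral_Type"
begin

type_synonym cmat3 = "complex ^ 3 ^ 3"

definition munit :: "3 \<Rightarrow> 3 \<Rightarrow> cmat3" where
  "munit j k = (\<chi> a b. if a = j \<and> b = k then 1 else 0)"

definition cscale :: "complex \<Rightarrow> cmat3 \<Rightarrow> cmat3" where
  "cscale c M = (\<chi> a b. c * M $ a $ b)"

fun mpow :: "cmat3 \<Rightarrow> nat \<Rightarrow> cmat3" where
  "mpow M 0 = mat 1"
| "mpow M (Suc n) = M ** mpow M n"

definition mexp :: "cmat3 \<Rightarrow> cmat3" where
  "mexp M = (\<Sum>n. (1 / fact n) *\<^sub>R mpow M n)"

definition E1 :: cmat3 where "E1 = cscale (1/2) (munit 1 2 - munit 2 1)"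
definition E2 :: cmat3 where "E2 = cscale (\<i>/2) (munit 1 2 + munit 2 1)"
definition E3 :: cmat3 where "E3 = cscale (\<i>/2) (munit 1 1 - munit 2 2)"
definition E4 :: cmat3 where "E4 = munit 3 3"

definition e1 :: cmat3 where "e1 = E1"
definition e2 :: cmat3 where "e2 = E4 - E3"
definition e3 :: cmat3 where "e3 = E2"
definition e4 :: cmat3 where "e4 = E3"

definition SUR :: "complex \<Rightarrow> complex \<Rightarrow> real \<Rightarrow> cmat3" where
  "SUR A B v = (\<chi> a b.
     if a = 1 \<and> b = 1 then A else
     if a = 1 \<and> b = 2 then B else
     if a = 2 \<and> b = 1 then - cnj B else
     if a = 2 \<and> b = 2 then cnj A else
     if a = 3 \<and> b = 3 then complex_of_real (exp v) else 0)"

definition gamma1 :: "real \<Rightarrow> real \<Rightarrow> real \<Rightarrow> real \<Rightarrow> real \<Rightarrow> cmat3" where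
  "gamma1 \<alpha>1 \<alpha>2 \<alpha>3 \<beta> t =
     mexp (t *\<^sub>R (\<alpha>1 *\<^sub>R e1 + \<alpha>2 *\<^sub>R e2 + \<alpha>3 *\<^sub>R e3 + \<beta> *\<^sub>R e4))
     ** mexp ((- t * \<beta>) *\<^sub>R e4)"

end

theory Submission
  imports Defs
begin

definition blk :: "complex \<Rightarrow> complex \<Rightarrow> complex \<Rightarrow> complex \<Rightarrow> complex \<Rightarrow> cmat3" where
"blk a b c d e = (\<chi> i j. if i=1 \<and> j=1 then a else if i=1 \<and> j=2 then b else if i=2 \<and> j=1 then c
   else if i=2 \<and> j=2 then d else if i=3 \<and> j=3 then e else 0)"

lemma blk_nth: "blk a b c d e $ 1 $ 1 = a" "blk a b c d e $ 1 $ 2 = b" "blk a b c d e $ 1 $ 3 = 0"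
  "blk a b c d e $ 2 $ 1 = c" "blk a b c d e $ 2 $ 2 = d" "blk a b c d e $ 2 $ 3 = 0"
  "blk a b c d e $ 3 $ 1 = 0" "blk a b c d e $ 3 $ 2 = 0" "blk a b c d e $ 3 $ 3 = e"
  by (simp_all add: blk_def)

lemma blk_eq_iff: "blk a b c d e = blk a' b' c' d' e' \<longleftrightarrow> a=a' \<and> b=b' \<and> c=c' \<and> d=d' \<and> e=e'"
  by (auto simp: vec_eq_iff forall_3 blk_def)

lemma blk_mult: "blk a b c d e ** blk a' b' c' d' e' =
  blk (a*a' + b*c') (a*b' + b*d') (c*a' + d*c') (c*b' + d*d') (e*e')"
  by (simp add: vec_eq_iff forall_3 matrix_matrix_mult_def sum_3 blk_def)

lemma blk_one: "mat 1 = blk 1 0 0 1 1"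
  by (simp add: vec_eq_iff forall_3 mat_def blk_def)

lemma blk_scaleR: "r *\<^sub>R blk a b c d e = blk (r *\<^sub>R a) (r *\<^sub>R b) (r *\<^sub>R c) (r *\<^sub>R d) (r *\<^sub>R e)"
  by (simp add: vec_eq_iff forall_3 blk_def)

lemma SUR_blk: "SUR A B v = blk A B (- cnj B) (cnj A) (exp v)"
  by (simp add: vec_eq_iff forall_3 blk_def SUR_def)

lemma M1_blk: "t *\<^sub>R (\<alpha>1 *\<^sub>R e1 + \<alpha>2 *\<^sub>R e2 + \<alpha>3 *\<^sub>R e3 + \<beta> *\<^sub>R e4) =
  blk (\<i> * (t*(\<beta>-\<alpha>2)/2)) (Complex (t*\<alpha>1/2) (t*\<alpha>3/2)) (- cnj (Complex (t*\<alpha>1/2) (t*\<alpha>3/2)))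
      (- \<i> * (t*(\<beta>-\<alpha>2)/2)) (t*\<alpha>2)"
  by (simp add: vec_eq_iff forall_3 blk_def e1_def e2_def e3_def e4_def E1_def E2_def E3_def E4_def
     cscale_def munit_def complex_eq_iff algebra_simps) argo

lemma M2_blk: "(- t * \<beta>) *\<^sub>R e4 = blk (\<i> * (- t*\<beta>/2)) 0 (- cnj 0) (- \<i> * (- t*\<beta>/2)) 0"
  by (simp add: vec_eq_iff forall_3 blk_def e4_def E3_def
     cscale_def munit_def complex_eq_iff algebra_simps)

definition Cf :: "real \<Rightarrow> nat \<Rightarrow> real" where "Cf r n = (if even n then (-r)^(n div 2) else 0)"
definition Sf :: "real \<Rightarrow> nat \<Rightarrow> real" where "Sf r n = (if odd n then (-r)^(n div 2) else 0)"

lemma mpow_blk: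
  fixes p :: real and q e :: complex
  assumes "r = p\<^sup>2 + (cmod q)\<^sup>2"
  shows "mpow (blk (\<i>*p) q (- cnj q) (- \<i>*p) e) n =
    blk (Cf r n + Sf r n * \<i> * p) (Sf r n * q) (- Sf r n * cnj q) (Cf r n - Sf r n * \<i> * p) (e^n)"
proof (induction n)
  case 0 then show ?case by (simp add: blk_one Cf_def Sf_def)
next
  case (Suc n)
  have qq: "q * cnj q = (cmod q)\<^sup>2" by (simp add: complex_mult_cnj cmod_power2)
  have C: "Cf r (Suc n) = - r * Sf r n" "Sf r (Suc n) = Cf r n"
    by (auto simp: Cf_def Sf_def)
  have hq: "cmod q * cmod q = Re q * Re q + Im q * Im q"
    by (metis cmod_power2 power2_eq_square)
  show ?case using Suc
    apply (simp add: blk_mult blk_eq_iff C)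
    using hq apply (simp add: assms algebra_simps power2_eq_square complex_eq_iff)
    done
qed

lemma vec_sums:
  fixes f :: "nat \<Rightarrow> cmat3"
  assumes "\<And>i j. (\<lambda>n. f n $ i $ j) sums (L $ i $ j)"
  shows "f sums L"
  unfolding sums_def
proof (rule vec_tendstoI, rule vec_tendstoI)
  fix i j
  show "((\<lambda>x. (\<Sum>k<x. f k) $ i $ j) \<longlongrightarrow> L $ i $ j) sequentially"
    using assms[of i j] by (simp add: sums_def)
qed

lemma Cf_sums:
  "(\<lambda>n. Cf (s\<^sup>2) n / fact n) sums cos s"
proof -
  have "Cf (s\<^sup>2) n / fact n = cos_coeff n *\<^sub>R s^n" for n
  proof (cases "even n")
    case True
    then obtain k where k: "n = 2*k" by blast
    show ?thesis using True by (simp add: Cf_def cos_coeff_def k power_mult power_mult_distrib[symmetric])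
  qed (simp add: Cf_def cos_coeff_def)
  then show ?thesis using cos_converges[of s] by simp
qed

lemma Sf_sums:
  "(\<lambda>n. Sf (s\<^sup>2) n / fact n) sums (if s = 0 then 1 else sin s / s)"
proof (cases "s = 0")
  case True
  have "Sf (s\<^sup>2) n / fact n = (if n = 1 then 1 else 0)" for n
    using True by (auto simp: Sf_def elim!: oddE)
  then show ?thesis using True sums_single[of 1 "\<lambda>_. 1::real"] by simp
next
  case False
  have "Sf (s\<^sup>2) n / fact n = (sin_coeff n *\<^sub>R s^n) / s" for n
  proof (cases "odd n")
    case True
    then obtain k where k: "n = 2*k+1" by (blast elim: oddE)
    show ?thesis using True False by (simp add: Sf_def sin_coeff_def k power_mult power_mult_distrib[symmetric])
  qed (simp add: Sf_def sin_coeff_def)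
  then show ?thesis using sums_divide[OF sin_converges[of s], of s] False by simp
qed

lemma mexp_blk:
  fixes p s :: real and q e :: complex
  assumes hs: "p\<^sup>2 + (cmod q)\<^sup>2 = s\<^sup>2"
  defines "\<sigma> \<equiv> (if s = 0 then 1 else sin s / s)"
  shows "mexp (blk (\<i>*p) q (- cnj q) (- \<i>*p) e) =
    blk (cos s + \<sigma> * \<i> * p) (\<sigma> * q) (- \<sigma> * cnj q) (cos s - \<sigma> * \<i> * p) (exp e)"
proof -
  let ?r = "s\<^sup>2"
  have C: "(\<lambda>n. complex_of_real (Cf ?r n / fact n)) sums complex_of_real (cos s)"
    using Cf_sums by (subst sums_of_real_iff)
  have S: "(\<lambda>n. complex_of_real (Sf ?r n / fact n)) sums complex_of_real \<sigma>"
    unfolding \<sigma>_def using Sf_sums by (subst sums_of_real_iff)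
  have E: "(\<lambda>n. (1 / fact n) *\<^sub>R e^n) sums exp e"
    using exp_converges[of e] by (simp add: divide_inverse_commute)
  have C11: "(\<lambda>n. complex_of_real (Cf ?r n / fact n) + complex_of_real (Sf ?r n / fact n) * (\<i> * p))
     sums (cos s + \<sigma> * (\<i> * p))"
    by (intro sums_add sums_mult2 C S)
  have C22: "(\<lambda>n. complex_of_real (Cf ?r n / fact n) - complex_of_real (Sf ?r n / fact n) * (\<i> * p))
     sums (cos s - \<sigma> * (\<i> * p))"
    by (intro sums_diff sums_mult2 C S)
  have C12: "(\<lambda>n. complex_of_real (Sf ?r n / fact n) * q) sums (\<sigma> * q)"
    by (intro sums_mult2 S)
  have C21: "(\<lambda>n. complex_of_real (Sf ?r n / fact n) * (- cnj q)) sums (\<sigma> * (- cnj q))"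
    by (intro sums_mult2 S)
  have mp: "mpow (blk (\<i>*p) q (- cnj q) (- \<i>*p) e) n =
    blk (Cf ?r n + Sf ?r n * \<i> * p) (Sf ?r n * q) (- Sf ?r n * cnj q) (Cf ?r n - Sf ?r n * \<i> * p) (e^n)" for n
    by (rule mpow_blk) (use hs in simp)
  show ?thesis
  proof -
    have "\<forall>i j. (\<lambda>n. ((1 / fact n) *\<^sub>R mpow (blk (\<i>*p) q (- cnj q) (- \<i>*p) e) n) $ i $ j) sums
      (blk (cos s + \<sigma> * \<i> * p) (\<sigma> * q) (- \<sigma> * cnj q) (cos s - \<sigma> * \<i> * p) (exp e) $ i $ j)"
      unfolding mp blk_scaleR forall_3
      using C11 C22 C12 C21 E
      by (simp add: blk_nth scaleR_conv_of_real algebra_simps divide_inverse)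
    then have "(\<lambda>n. (1 / fact n) *\<^sub>R mpow (blk (\<i>*p) q (- cnj q) (- \<i>*p) e) n) sums
      (blk (cos s + \<sigma> * \<i> * p) (\<sigma> * q) (- \<sigma> * cnj q) (cos s - \<sigma> * \<i> * p) (exp e))"
      by (intro vec_sums) blast
    from sums_unique[OF this] show ?thesis by (simp add: mexp_def)
  qed
qed

theorem theorem4:
  fixes \<alpha>1 \<alpha>2 \<alpha>3 \<beta> t :: real
  assumes "\<alpha>1\<^sup>2 + \<alpha>2\<^sup>2 + \<alpha>3\<^sup>2 = 1"
  defines "w1 \<equiv> sqrt (1 - \<alpha>2\<^sup>2 + (\<beta> - \<alpha>2)\<^sup>2)"
  defines "n1 \<equiv> cos (w1 * t / 2)"
  defines "m1 \<equiv> (1 / w1) * sin (w1 * t / 2)"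
  shows "(\<alpha>2 \<noteq> 1 \<and> \<alpha>2 \<noteq> -1 \<longrightarrow>
           (\<forall>\<phi>0. cos \<phi>0 = \<alpha>1 / sqrt (1 - \<alpha>2\<^sup>2) \<and> sin \<phi>0 = \<alpha>3 / sqrt (1 - \<alpha>2\<^sup>2) \<longrightarrow>
              gamma1 \<alpha>1 \<alpha>2 \<alpha>3 \<beta> t =
              SUR (Complex (n1 * cos (\<beta> * t / 2) + (\<beta> - \<alpha>2) * m1 * sin (\<beta> * t / 2))
                           ((\<beta> - \<alpha>2) * m1 * cos (\<beta> * t / 2) - n1 * sin (\<beta> * t / 2)))
                  (complex_of_real (m1 * sqrt (1 - \<alpha>2\<^sup>2)) *
                     (complex_of_real (cos (\<beta> * t / 2 + \<phi>0)) + \<i> * complex_of_real (sin (\<beta> * t / 2 + \<phi>0))))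
                  (\<alpha>2 * t)))
       \<and> (\<alpha>2 = 1 \<or> \<alpha>2 = -1 \<longrightarrow>
           gamma1 \<alpha>1 \<alpha>2 \<alpha>3 \<beta> t = SUR (exp (- \<i> * complex_of_real (\<alpha>2 * t / 2))) 0 (\<alpha>2 * t))"
proof -
  let ?p1 = "t*(\<beta>-\<alpha>2)/2" and ?q = "Complex (t*\<alpha>1/2) (t*\<alpha>3/2)" and ?p2 = "- t*\<beta>/2"
  define M1 where "M1 = blk (\<i> * ?p1) ?q (- cnj ?q) (- \<i> * ?p1) (t*\<alpha>2)"
  define M2 where "M2 = blk (\<i> * ?p2) 0 (- cnj 0) (- \<i> * ?p2) 0"
  have g: "gamma1 \<alpha>1 \<alpha>2 \<alpha>3 \<beta> t = mexp M1 ** mexp M2"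
    unfolding gamma1_def M1_def M2_def M1_blk M2_blk ..
  have cq: "(cmod ?q)\<^sup>2 = (t*\<alpha>1/2)\<^sup>2 + (t*\<alpha>3/2)\<^sup>2"
    by (simp add: cmod_power2)
  have E2: "mexp M2 = blk (cos ?p2 + sin ?p2 * \<i>) 0 0 (cos ?p2 - sin ?p2 * \<i>) 1"
    unfolding M2_def using mexp_blk[of ?p2 0 ?p2 0]
    by (cases "?p2 = 0") (auto simp: blk_eq_iff complex_eq_iff)
  have part1: "(\<alpha>2 \<noteq> 1 \<and> \<alpha>2 \<noteq> -1 \<longrightarrow>
           (\<forall>\<phi>0. cos \<phi>0 = \<alpha>1 / sqrt (1 - \<alpha>2\<^sup>2) \<and> sin \<phi>0 = \<alpha>3 / sqrt (1 - \<alpha>2\<^sup>2) \<longrightarrow>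
              gamma1 \<alpha>1 \<alpha>2 \<alpha>3 \<beta> t =
              SUR (Complex (n1 * cos (\<beta> * t / 2) + (\<beta> - \<alpha>2) * m1 * sin (\<beta> * t / 2))
                           ((\<beta> - \<alpha>2) * m1 * cos (\<beta> * t / 2) - n1 * sin (\<beta> * t / 2)))
                  (complex_of_real (m1 * sqrt (1 - \<alpha>2\<^sup>2)) *
                     (complex_of_real (cos (\<beta> * t / 2 + \<phi>0)) + \<i> * complex_of_real (sin (\<beta> * t / 2 + \<phi>0))))
                  (\<alpha>2 * t)))"
  proof (intro impI allI)
    fix \<phi>0
    assume a2: "\<alpha>2 \<noteq> 1 \<and> \<alpha>2 \<noteq> -1"
      and ph: "cos \<phi>0 = \<alpha>1 / sqrt (1 - \<alpha>2\<^sup>2) \<and> sin \<phi>0 = \<alpha>3 / sqrt (1 - \<alpha>2\<^sup>2)"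
    have "\<alpha>2\<^sup>2 \<noteq> 1" using a2 by (metis power2_eq_1_iff)
    then have pos: "1 - \<alpha>2\<^sup>2 > 0" using assms(1)
      by (smt (verit) zero_le_power2)
    then have sq: "sqrt (1 - \<alpha>2\<^sup>2) > 0" by simp
    have c1: "sqrt (1 - \<alpha>2\<^sup>2) * cos \<phi>0 = \<alpha>1" using ph sq by simp
    have s1: "sqrt (1 - \<alpha>2\<^sup>2) * sin \<phi>0 = \<alpha>3" using ph sq by simp
    have w1pos: "w1 > 0" unfolding w1_def using pos
      by (smt (verit) real_sqrt_gt_zero zero_le_power2)
    have w1sq: "w1\<^sup>2 = 1 - \<alpha>2\<^sup>2 + (\<beta> - \<alpha>2)\<^sup>2" unfolding w1_def using pos
      by (simp add: add_nonneg_pos)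
    define \<sigma> where "\<sigma> = (if w1 * t / 2 = 0 then 1 else sin (w1 * t / 2) / (w1 * t / 2))"
    have hs: "?p1\<^sup>2 + (cmod ?q)\<^sup>2 = (w1 * t / 2)\<^sup>2"
    proof -
      have h: "\<alpha>1\<^sup>2 + \<alpha>3\<^sup>2 = 1 - \<alpha>2\<^sup>2" using assms(1) by simp
      have "?p1\<^sup>2 + (cmod ?q)\<^sup>2 = t\<^sup>2/4 * ((\<beta>-\<alpha>2)\<^sup>2 + (\<alpha>1\<^sup>2 + \<alpha>3\<^sup>2))"
        unfolding cq by (simp add: power2_eq_square field_simps)
      also have "\<dots> = t\<^sup>2/4 * w1\<^sup>2" using h w1sq by simp
      also have "\<dots> = (w1 * t / 2)\<^sup>2" by (simp add: power2_eq_square)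
      finally show ?thesis .
    qed
    have E1: "mexp M1 = blk (cos (w1*t/2) + \<sigma> * \<i> * ?p1) (\<sigma> * ?q) (- \<sigma> * cnj ?q) (cos (w1*t/2) - \<sigma> * \<i> * ?p1) (exp (complex_of_real (t*\<alpha>2)))"
      unfolding M1_def \<sigma>_def using mexp_blk[OF hs, of "complex_of_real (t*\<alpha>2)"] by simp
    have sig: "\<sigma> * t = 2 * m1"
    proof (cases "t = 0")
      case True then show ?thesis by (simp add: m1_def)
    next
      case False
      then have "w1 * t / 2 \<noteq> 0" using w1pos by simp
      then show ?thesis using False w1pos unfolding \<sigma>_def m1_def by (simp add: field_simps)
    qed
    have E1': "mexp M1 = blk (cos (w1*t/2) + \<i> * ((\<beta>-\<alpha>2)*m1)) (m1 * Complex \<alpha>1 \<alpha>3)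
       (- (m1 * cnj (Complex \<alpha>1 \<alpha>3))) (cos (w1*t/2) - \<i> * ((\<beta>-\<alpha>2)*m1)) (exp (t*\<alpha>2))"
    proof -
      have x1: "\<sigma> * (t * X / 2) = m1 * X" for X using sig by (metis mult.assoc mult.commute nonzero_mult_div_cancel_left times_divide_eq_right zero_neq_numeral)
      have x2: "exp (complex_of_real (t*\<alpha>2)) = complex_of_real (exp (t*\<alpha>2))" by (simp only: exp_of_real)
      show ?thesis unfolding E1 x2 blk_eq_iff
        by (simp add: complex_eq_iff x1 algebra_simps sig) (simp add: field_simps)
    qed
    show "gamma1 \<alpha>1 \<alpha>2 \<alpha>3 \<beta> t = SUR (Complex (n1 * cos (\<beta> * t / 2) + (\<beta> - \<alpha>2) * m1 * sin (\<beta> * t / 2))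
                           ((\<beta> - \<alpha>2) * m1 * cos (\<beta> * t / 2) - n1 * sin (\<beta> * t / 2)))
                  (complex_of_real (m1 * sqrt (1 - \<alpha>2\<^sup>2)) *
                     (complex_of_real (cos (\<beta> * t / 2 + \<phi>0)) + \<i> * complex_of_real (sin (\<beta> * t / 2 + \<phi>0))))
                  (\<alpha>2 * t)"
      unfolding g E1' E2 blk_mult SUR_blk blk_eq_iff
      using sq ph
      by (simp add: complex_eq_iff n1_def cos_add sin_add algebra_simps)
  qed
  show ?thesis
  proof (intro conjI part1 impI)
    assume a2: "\<alpha>2 = 1 \<or> \<alpha>2 = -1"
    then have "\<alpha>2\<^sup>2 = 1" by auto
    then have "\<alpha>1\<^sup>2 + \<alpha>3\<^sup>2 = 0" using assms(1) by simp
    then have z: "\<alpha>1 = 0" "\<alpha>3 = 0" by (smt (verit) zero_le_power2 zero_eq_power2)+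
    have q0: "?q = 0" using z by (simp add: complex_eq_iff)
    have hs: "?p1\<^sup>2 + (cmod ?q)\<^sup>2 = ?p1\<^sup>2" using q0 by simp
    have M1': "M1 = blk (\<i> * ?p1) 0 (- cnj 0) (- \<i> * ?p1) (complex_of_real (t*\<alpha>2))"
      unfolding M1_def q0 ..
    have x2: "exp (complex_of_real (t*\<alpha>2)) = complex_of_real (exp (t*\<alpha>2))" by (simp only: exp_of_real)
    have E1: "mexp M1 = blk (cos ?p1 + \<i> * sin ?p1) 0 0 (cos ?p1 - \<i> * sin ?p1) (exp (t*\<alpha>2))"
      unfolding M1' x2[symmetric] using mexp_blk[of ?p1 0 ?p1 "complex_of_real (t*\<alpha>2)"]
      by (cases "?p1 = 0") (auto simp: blk_eq_iff complex_eq_iff)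
    have pp: "- (\<alpha>2 * t / 2) = ?p1 + ?p2" by (simp add: field_simps)
    have ex: "exp (- \<i> * complex_of_real (\<alpha>2 * t / 2)) = Complex (cos (?p1 + ?p2)) (sin (?p1 + ?p2))"
      unfolding pp[symmetric] by (simp add: complex_eq_iff Re_exp Im_exp)
    show "gamma1 \<alpha>1 \<alpha>2 \<alpha>3 \<beta> t = SUR (exp (- \<i> * complex_of_real (\<alpha>2 * t / 2))) 0 (\<alpha>2 * t)"
      unfolding g E1 E2 blk_mult SUR_blk blk_eq_iff ex
      by (simp add: complex_eq_iff cos_add sin_add cos_diff sin_diff algebra_simps)
  qed
qed

end
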